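(* Let $\mathbf{x},\mathbf{v}$ be random variables, $\mathrm{t}\in\{0,1\}$ a treatment and $\mathbf{y}(t)$ the potential outcomes. Suppose $\mathbf{x}$ is a balancing covariate of $\mathbf{v}$, i.e. $\mathrm{t}\perp\mathbf{v}\mid\mathbf{x}$. If $\mathbf{v}$ satisfies exchangeability ($\mathbf{y}(t)\perp\mathrm{t}\mid\mathbf{v}$) and $\mathbf{y}(t)\perp\mathbf{x}\mid\mathbf{v},\mathrm{t}$, then $\mathbf{x}$ satisfies exchangeability, i.e. $\mathbf{y}(t)\perp\mathrm{t}\mid\mathbf{x}$.
   Context: Potential outcomes framework with binary treatment $\mathrm{t}$ and potential outcomes $\mathbf{y}(0),\mathbf{y}(1)$; statements involving $t$ without quantification are meant for both $t\in\{0,1\}$. *)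

theory Defs
  imports "HOL-Probability.Probability"
begin

definition cond_indep ::
  "'a measure \<Rightarrow> 'x measure \<Rightarrow> ('a \<Rightarrow> 'x) \<Rightarrow> 'y measure \<Rightarrow> ('a \<Rightarrow> 'y)
    \<Rightarrow> 'z measure \<Rightarrow> ('a \<Rightarrow> 'z) \<Rightarrow> bool" where
  "cond_indep M MX X MY Y MZ Z \<longleftrightarrow>
     (\<forall>A\<in>sets MX. \<forall>B\<in>sets MY.
        AE \<omega> in M.
          real_cond_exp M (vimage_algebra (space M) Z MZ)
              (\<lambda>\<omega>. indicator A (X \<omega>) * indicator B (Y \<omega>)) \<omega>
          = real_cond_exp M (vimage_algebra (space M) Z MZ) (\<lambda>\<omega>. indicator A (X \<omega>)) \<omega>
            * real_cond_exp M (vimage_algebra (space M) Z MZ) (\<lambda>\<omega>. indicator B (Y \<omega>)) \<omega>)"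

end

theory Submission
  imports Defs
begin


lemma sfs:
  assumes "prob_space M" "Z \<in> measurable M N"
  shows "sigma_finite_subalgebra M (vimage_algebra (space M) Z N)"
proof -
  interpret prob_space M by fact
  have sub: "subalgebra M (vimage_algebra (space M) Z N)"
    unfolding subalgebra_def using assms(2)
    by (auto simp: sets_vimage_algebra2 measurable_def space_vimage_algebra)
  show ?thesis
    by (rule finite_measure_subalgebra_is_sigma_finite)
       (simp add: finite_measure_subalgebra_def finite_measure_subalgebra_axioms_def sub finite_measure_axioms)
qed

lemma meas_va: "Z \<in> measurable M N \<Longrightarrow> Z \<in> measurable (vimage_algebra (space M) Z N) N"
  by (rule measurable_vimage_algebra1) (auto simp: measurable_def)

lemma bint:
  fixes f :: "'a \<Rightarrow> real"
  assumes "prob_space M" "f \<in> borel_measurable M" "AE x in M. \<bar>f x\<bar> \<le> 1"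
  shows "integrable M f"
proof -
  interpret prob_space M by fact
  show ?thesis using integrable_const_bound[where B=1 and f=f] assms by auto
qed

lemma ce_bound:
  fixes f :: "'a \<Rightarrow> real"
  assumes "prob_space M" "sigma_finite_subalgebra M F" "f \<in> borel_measurable M"
    "\<And>x. x \<in> space M \<Longrightarrow> 0 \<le> f x \<and> f x \<le> 1"
  shows "AE x in M. \<bar>real_cond_exp M F f x\<bar> \<le> 1"
proof -
  interpret sigma_finite_subalgebra M F by fact
  have i: "integrable M f" using bint[OF assms(1,3)] assms(4) by auto
  have "AE x in M. real_cond_exp M F f x \<ge> 0"
    by (rule real_cond_exp_ge_c[OF i]) (use assms(4) in auto)
  moreover have "AE x in M. real_cond_exp M F f x \<le> 1"
    by (rule real_cond_exp_le_c[OF i]) (use assms(4) in auto)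
  ultimately show ?thesis by auto
qed

lemma stepV:
  fixes Yt :: "'a \<Rightarrow> 'y" and T :: "'a \<Rightarrow> bool"
  assumes P: "prob_space M" and [measurable]: "V \<in> measurable M MV" "Yt \<in> measurable M MY"
    "T \<in> measurable M (count_space UNIV)"
    and H: "cond_indep M MY Yt (count_space UNIV) T MV V"
    and [measurable]: "B \<in> sets MY" "C \<in> sets MV"
  shows "(\<integral>\<omega>. indicator C (V \<omega>) * indicator s (T \<omega>) * indicator B (Yt \<omega>) \<partial>M)
    = (\<integral>\<omega>. indicator C (V \<omega>) * indicator s (T \<omega>) *
         real_cond_exp M (vimage_algebra (space M) V MV) (\<lambda>\<omega>. indicator B (Yt \<omega>)) \<omega> \<partial>M)"
proof -
  let ?F = "vimage_algebra (space M) V MV"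
  interpret FV: sigma_finite_subalgebra M ?F using sfs[OF P \<open>V \<in> measurable M MV\<close>] by simp
  have [measurable]: "V \<in> measurable ?F MV" by (rule meas_va) measurable
  let ?Eb = "real_cond_exp M ?F (\<lambda>\<omega>. indicator B (Yt \<omega>))"
  let ?Et = "real_cond_exp M ?F (\<lambda>\<omega>. indicator s (T \<omega>))"
  have ae: "AE \<omega> in M. real_cond_exp M ?F (\<lambda>\<omega>. indicator B (Yt \<omega>) * indicator s (T \<omega>)) \<omega> = ?Eb \<omega> * ?Et \<omega>"
    using H \<open>B \<in> sets MY\<close> unfolding cond_indep_def by auto
  have bEb: "AE \<omega> in M. \<bar>?Eb \<omega>\<bar> \<le> 1"
    by (rule ce_bound[OF P FV.sigma_finite_subalgebra_axioms]) (auto simp: indicator_def)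
  have bEt: "AE \<omega> in M. \<bar>?Et \<omega>\<bar> \<le> 1"
    by (rule ce_bound[OF P FV.sigma_finite_subalgebra_axioms]) (auto simp: indicator_def)
  have "(\<integral>\<omega>. (indicator C (V \<omega>)::real) * indicator s (T \<omega>) * indicator B (Yt \<omega>) \<partial>M)
     = (\<integral>\<omega>. indicator C (V \<omega>) * (indicator B (Yt \<omega>) * indicator s (T \<omega>)) \<partial>M)"
    by (intro arg_cong[where f="integral\<^sup>L M"] ext) (simp only: ac_simps)
  also have "\<dots> = (\<integral>\<omega>. indicator C (V \<omega>) * real_cond_exp M ?F (\<lambda>\<omega>. indicator B (Yt \<omega>) * indicator s (T \<omega>)) \<omega> \<partial>M)"
    by (rule FV.real_cond_exp_intg(2)[symmetric]) (auto intro!: bint[OF P] simp: indicator_def)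
  also have "\<dots> = (\<integral>\<omega>. (indicator C (V \<omega>) * ?Eb \<omega>) * ?Et \<omega> \<partial>M)"
    by (rule integral_cong_AE) (use ae in auto)
  also have "\<dots> = (\<integral>\<omega>. (indicator C (V \<omega>) * ?Eb \<omega>) * indicator s (T \<omega>) \<partial>M)"
  proof (rule FV.real_cond_exp_intg(2))
    show "integrable M (\<lambda>\<omega>. indicator C (V \<omega>) * ?Eb \<omega> * indicator s (T \<omega>))"
      by (rule bint[OF P]) (use bEb in \<open>auto simp: indicator_def\<close>)
  qed auto
  also have "\<dots> = (\<integral>\<omega>. indicator C (V \<omega>) * indicator s (T \<omega>) * ?Eb \<omega> \<partial>M)"
    by (intro arg_cong[where f="integral\<^sup>L M"] ext) (simp only: ac_simps)
  finally show ?thesis .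
qed

lemma split_ind:
  fixes T :: "'a \<Rightarrow> bool"
  shows "(indicator D (V w, T w) :: real) * (indicator s (T w) * k) =
    indicator ((\<lambda>x. (x, True)) -` D) (V w) * indicator ({True} \<inter> s) (T w) * k +
    indicator ((\<lambda>x. (x, False)) -` D) (V w) * indicator ({False} \<inter> s) (T w) * k"
  by (cases "T w") (auto simp: indicator_def)

lemma stepVT:
  fixes Yt :: "'a \<Rightarrow> 'y" and T :: "'a \<Rightarrow> bool"
  assumes P: "prob_space M" and [measurable]: "X \<in> measurable M MX" "V \<in> measurable M MV" "Yt \<in> measurable M MY"
    "T \<in> measurable M (count_space UNIV)"
    and H2: "cond_indep M MY Yt (count_space UNIV) T MV V"
    and H3: "cond_indep M MY Yt MX X (MV \<Otimes>\<^sub>M count_space UNIV) (\<lambda>\<omega>. (V \<omega>, T \<omega>))"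
    and [measurable]: "B \<in> sets MY" "A \<in> sets MX"
  shows "(\<integral>\<omega>. indicator A (X \<omega>) * indicator s (T \<omega>) * indicator B (Yt \<omega>) \<partial>M)
    = (\<integral>\<omega>. indicator A (X \<omega>) * indicator s (T \<omega>) *
         real_cond_exp M (vimage_algebra (space M) V MV) (\<lambda>\<omega>. indicator B (Yt \<omega>)) \<omega> \<partial>M)"
proof -
  let ?F = "vimage_algebra (space M) V MV"
  let ?G = "vimage_algebra (space M) (\<lambda>\<omega>. (V \<omega>, T \<omega>)) (MV \<Otimes>\<^sub>M count_space UNIV)"
  have VTm[measurable]: "(\<lambda>\<omega>. (V \<omega>, T \<omega>)) \<in> measurable M (MV \<Otimes>\<^sub>M count_space UNIV)" by measurable
  interpret FV: sigma_finite_subalgebra M ?F using sfs[OF P \<open>V \<in> measurable M MV\<close>] by simp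
  interpret FG: sigma_finite_subalgebra M ?G using sfs[OF P VTm] by simp
  have [measurable]: "V \<in> measurable ?F MV" by (rule meas_va) measurable
  have VTG: "(\<lambda>\<omega>. (V \<omega>, T \<omega>)) \<in> measurable ?G (MV \<Otimes>\<^sub>M count_space UNIV)" by (rule meas_va) measurable
  have [measurable]: "T \<in> measurable ?G (count_space UNIV)"
    using measurable_compose[OF VTG measurable_snd] by simp
  have [measurable]: "V \<in> measurable ?G MV"
    using measurable_compose[OF VTG measurable_fst] by simp
  have spG: "space ?G = space M" "space ?F = space M" by (simp_all add: space_vimage_algebra)
  have "sets ?F \<subseteq> sets ?G"
  proof
    fix S assume "S \<in> sets ?F"
    then obtain C where C: "C \<in> sets MV" "S = V -` C \<inter> space M"
      using sets_vimage_algebra2[of V "space M" MV] measurable_space[OF \<open>V \<in> measurable M MV\<close>] by auto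
    show "S \<in> sets ?G" using measurable_sets[OF \<open>V \<in> measurable ?G MV\<close> C(1)] C(2) spG by simp
  qed
  then have FG_sub: "borel_measurable ?F \<subseteq> borel_measurable ?G"
    by (intro measurable_mono) (auto simp: spG)
  let ?g = "real_cond_exp M ?F (\<lambda>\<omega>. indicator B (Yt \<omega>))"
  have gG[measurable]: "?g \<in> borel_measurable ?G" using FG_sub borel_measurable_cond_exp by blast
  have bg: "AE \<omega> in M. \<bar>?g \<omega>\<bar> \<le> 1"
    by (rule ce_bound[OF P FV.sigma_finite_subalgebra_axioms]) (auto simp: indicator_def)
  let ?Ea = "real_cond_exp M ?G (\<lambda>\<omega>. indicator A (X \<omega>))"
  let ?Eb = "real_cond_exp M ?G (\<lambda>\<omega>. indicator B (Yt \<omega>))"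
  have bEa: "AE \<omega> in M. \<bar>?Ea \<omega>\<bar> \<le> 1"
    by (rule ce_bound[OF P FG.sigma_finite_subalgebra_axioms]) (auto simp: indicator_def)
  have c1: "AE \<omega> in M. real_cond_exp M ?G (\<lambda>\<omega>. indicator s (T \<omega>) * indicator B (Yt \<omega>)) \<omega>
      = indicator s (T \<omega>) * ?g \<omega>"
  proof (rule FG.real_cond_exp_charact)
    show "integrable M (\<lambda>\<omega>. indicator s (T \<omega>) * indicator B (Yt \<omega>) :: real)"
      by (rule bint[OF P]) (auto simp: indicator_def)
    show "integrable M (\<lambda>\<omega>. indicator s (T \<omega>) * ?g \<omega>)"
      by (rule bint[OF P]) (use bg in \<open>auto simp: indicator_def\<close>)
    show "(\<lambda>\<omega>. indicator s (T \<omega>) * ?g \<omega>) \<in> borel_measurable ?G" by measurable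
    fix S assume "S \<in> sets ?G"
    then obtain D where D: "D \<in> sets (MV \<Otimes>\<^sub>M count_space UNIV)" "S = (\<lambda>\<omega>. (V \<omega>, T \<omega>)) -` D \<inter> space M"
      using sets_vimage_algebra2[of "\<lambda>\<omega>. (V \<omega>, T \<omega>)" "space M" "MV \<Otimes>\<^sub>M count_space UNIV"]
        measurable_space[OF VTm] by auto
    define D1 where "D1 = (\<lambda>x. (x, True)) -` D"
    define D0 where "D0 = (\<lambda>x. (x, False)) -` D"
    have [measurable]: "D1 \<in> sets MV" "D0 \<in> sets MV" unfolding D1_def D0_def using D(1) by (auto intro: sets_Pair2)
    have ind: "\<And>\<omega> k. \<omega> \<in> space M \<Longrightarrow> indicator S \<omega> * (indicator s (T \<omega>) * k) =
      indicator D1 (V \<omega>) * indicator ({True} \<inter> s) (T \<omega>) * k +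
      indicator D0 (V \<omega>) * indicator ({False} \<inter> s) (T \<omega>) * (k::real)"
      unfolding D1_def D0_def D(2) using split_ind[where D=D and V=V and T=T and s=s] by (simp add: indicator_def)
    have "(\<integral>\<omega>\<in>S. (indicator s (T \<omega>)::real) * indicator B (Yt \<omega>) \<partial>M)
      = (\<integral>\<omega>. (indicator D1 (V \<omega>)::real) * indicator ({True} \<inter> s) (T \<omega>) * indicator B (Yt \<omega>) +
      indicator D0 (V \<omega>) * indicator ({False} \<inter> s) (T \<omega>) * indicator B (Yt \<omega>) \<partial>M)"
      unfolding set_lebesgue_integral_def
    proof (intro Bochner_Integration.integral_cong refl)
      fix w assume "w \<in> space M"
      from ind[OF this, of "indicator B (Yt w)"]
      show "indicator S w *\<^sub>R (indicator s (T w) * indicator B (Yt w)) = indicator D1 (V w) * indicator ({True} \<inter> s) (T w) * indicator B (Yt w) +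
      indicator D0 (V w) * indicator ({False} \<inter> s) (T w) * (indicator B (Yt w)::real)" by simp
    qed
    also have "\<dots> = (\<integral>\<omega>. indicator D1 (V \<omega>) * indicator ({True} \<inter> s) (T \<omega>) * indicator B (Yt \<omega>) \<partial>M) +
      (\<integral>\<omega>. indicator D0 (V \<omega>) * indicator ({False} \<inter> s) (T \<omega>) * indicator B (Yt \<omega>) \<partial>M)"
      by (intro Bochner_Integration.integral_add bint[OF P]) (auto simp: indicator_def)
    also have "\<dots> = (\<integral>\<omega>. indicator D1 (V \<omega>) * indicator ({True} \<inter> s) (T \<omega>) * ?g \<omega> \<partial>M) +
      (\<integral>\<omega>. indicator D0 (V \<omega>) * indicator ({False} \<inter> s) (T \<omega>) * ?g \<omega> \<partial>M)"
      by (simp add: stepV[OF P _ _ _ H2])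
    also have "\<dots> = (\<integral>\<omega>. indicator D1 (V \<omega>) * indicator ({True} \<inter> s) (T \<omega>) * ?g \<omega> +
      indicator D0 (V \<omega>) * indicator ({False} \<inter> s) (T \<omega>) * ?g \<omega> \<partial>M)"
      by (intro Bochner_Integration.integral_add[symmetric] bint[OF P]) (use bg in \<open>auto simp: indicator_def\<close>)
    also have "\<dots> = (\<integral>\<omega>\<in>S. indicator s (T \<omega>) * ?g \<omega> \<partial>M)"
      unfolding set_lebesgue_integral_def
    proof (intro Bochner_Integration.integral_cong refl)
      fix w assume "w \<in> space M"
      from ind[OF this, of "?g w"]
      show "indicator D1 (V w) * indicator ({True} \<inter> s) (T w) * ?g w +
      indicator D0 (V w) * indicator ({False} \<inter> s) (T w) * ?g w = indicator S w *\<^sub>R (indicator s (T w) * ?g w)" by simp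
    qed
    finally show "(\<integral>\<omega>\<in>S. indicator s (T \<omega>) * indicator B (Yt \<omega>) \<partial>M) = (\<integral>\<omega>\<in>S. indicator s (T \<omega>) * ?g \<omega> \<partial>M)" .
  qed
  have c2: "AE \<omega> in M. real_cond_exp M ?G (\<lambda>\<omega>. indicator s (T \<omega>) * indicator B (Yt \<omega>)) \<omega>
      = indicator s (T \<omega>) * ?Eb \<omega>"
    by (rule FG.real_cond_exp_mult) (auto intro!: bint[OF P] simp: indicator_def)
  have key: "AE \<omega> in M. indicator s (T \<omega>) * ?Eb \<omega> = indicator s (T \<omega>) * ?g \<omega>"
    using c1 c2 by auto
  have ae3: "AE \<omega> in M. real_cond_exp M ?G (\<lambda>\<omega>. indicator B (Yt \<omega>) * indicator A (X \<omega>)) \<omega> = ?Eb \<omega> * ?Ea \<omega>"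
    using H3 unfolding cond_indep_def by auto
  have "(\<integral>\<omega>. indicator A (X \<omega>) * indicator s (T \<omega>) * indicator B (Yt \<omega>) \<partial>M)
     = (\<integral>\<omega>. (indicator s (T \<omega>)::real) * (indicator B (Yt \<omega>) * indicator A (X \<omega>)) \<partial>M)"
    by (intro arg_cong[where f="integral\<^sup>L M"] ext) (simp only: ac_simps)
  also have "\<dots> = (\<integral>\<omega>. indicator s (T \<omega>) * real_cond_exp M ?G (\<lambda>\<omega>. indicator B (Yt \<omega>) * indicator A (X \<omega>)) \<omega> \<partial>M)"
    by (rule FG.real_cond_exp_intg(2)[symmetric]) (auto intro!: bint[OF P] simp: indicator_def)
  also have "\<dots> = (\<integral>\<omega>. (indicator s (T \<omega>) * ?Eb \<omega>) * ?Ea \<omega> \<partial>M)"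
    by (rule integral_cong_AE) (use ae3 in \<open>auto simp: ac_simps\<close>)
  also have "\<dots> = (\<integral>\<omega>. (indicator s (T \<omega>) * ?g \<omega>) * ?Ea \<omega> \<partial>M)"
    by (rule integral_cong_AE) (use key in auto)
  also have "\<dots> = (\<integral>\<omega>. (indicator s (T \<omega>) * ?g \<omega>) * indicator A (X \<omega>) \<partial>M)"
  proof (rule FG.real_cond_exp_intg(2))
    show "integrable M (\<lambda>\<omega>. indicator s (T \<omega>) * ?g \<omega> * indicator A (X \<omega>))"
      by (rule bint[OF P]) (use bg in \<open>auto simp: indicator_def\<close>)
  qed auto
  also have "\<dots> = (\<integral>\<omega>. indicator A (X \<omega>) * indicator s (T \<omega>) * ?g \<omega> \<partial>M)"
    by (intro arg_cong[where f="integral\<^sup>L M"] ext) (simp only: ac_simps)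
  finally show ?thesis .
qed

lemma abs1: "\<bar>x\<bar> \<le> 1 \<Longrightarrow> \<bar>y\<bar> \<le> 1 \<Longrightarrow> \<bar>x\<bar> * \<bar>y\<bar> \<le> (1::real)"
  by (simp add: mult_le_one)

lemma AE_abs2: "AE x in M. \<bar>f x\<bar> \<le> 1 \<Longrightarrow> AE x in M. \<bar>g x\<bar> \<le> 1 \<Longrightarrow> AE x in M. \<bar>f x\<bar> * \<bar>g x\<bar> \<le> (1::real)"
  by (erule AE_mp, erule AE_mp) (auto intro: abs1)

lemma setint_va:
  assumes "Z \<in> measurable M N" "G \<in> sets (vimage_algebra (space M) Z N)"
  obtains A where "A \<in> sets N" "\<And>f::'a\<Rightarrow>real. (\<integral>x\<in>G. f x \<partial>M) = (\<integral>x. indicator A (Z x) * f x \<partial>M)"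
proof -
  obtain A where A: "A \<in> sets N" "G = Z -` A \<inter> space M"
    using assms sets_vimage_algebra2[of Z "space M" N] measurable_space[OF assms(1)] by auto
  have "(\<integral>x\<in>G. f x \<partial>M) = (\<integral>x. indicator A (Z x) * f x \<partial>M)" for f :: "'a \<Rightarrow> real"
    unfolding set_lebesgue_integral_def
    by (intro Bochner_Integration.integral_cong refl) (auto simp: A(2) indicator_def)
  then show ?thesis using that A(1) by blast
qed

theorem proposition7:
  fixes M :: "'a measure"
    and MX :: "'x measure" and X :: "'a \<Rightarrow> 'x"
    and MV :: "'v measure" and V :: "'a \<Rightarrow> 'v"
    and MY :: "'y measure" and Y :: "bool \<Rightarrow> 'a \<Rightarrow> 'y"
    and T :: "'a \<Rightarrow> bool"
  assumes "prob_space M"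
    and "X \<in> measurable M MX"
    and "V \<in> measurable M MV"
    and "\<And>t. Y t \<in> measurable M MY"
    and "T \<in> measurable M (count_space UNIV)"
    and balancing: "cond_indep M (count_space UNIV) T MV V MX X"
    and exch_v: "\<And>t. cond_indep M MY (Y t) (count_space UNIV) T MV V"
    and y_x_given_vt: "\<And>t. cond_indep M MY (Y t) MX X
                          (MV \<Otimes>\<^sub>M count_space UNIV) (\<lambda>\<omega>. (V \<omega>, T \<omega>))"
  shows "\<forall>t. cond_indep M MY (Y t) (count_space UNIV) T MX X"
proof
  fix t
  note P = \<open>prob_space M\<close>
  note [measurable] = \<open>X \<in> measurable M MX\<close> \<open>V \<in> measurable M MV\<close> \<open>T \<in> measurable M (count_space UNIV)\<close>
  have [measurable]: "Y t \<in> measurable M MY" by fact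
  let ?FX = "vimage_algebra (space M) X MX"
  let ?FV = "vimage_algebra (space M) V MV"
  interpret FX: sigma_finite_subalgebra M ?FX using sfs[OF P \<open>X \<in> measurable M MX\<close>] by simp
  interpret FV: sigma_finite_subalgebra M ?FV using sfs[OF P \<open>V \<in> measurable M MV\<close>] by simp
  have [measurable]: "X \<in> measurable ?FX MX" by (rule meas_va) measurable
  have [measurable]: "V \<in> measurable ?FV MV" by (rule meas_va) measurable
  show "cond_indep M MY (Y t) (count_space UNIV) T MX X"
    unfolding cond_indep_def
  proof (intro ballI)
    fix B s assume B[measurable]: "B \<in> sets MY" and "s \<in> sets (count_space (UNIV::bool set))"
    let ?b = "\<lambda>\<omega>. indicator B (Y t \<omega>) :: real"
    let ?\<tau> = "\<lambda>\<omega>. indicator s (T \<omega>) :: real"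
    let ?g = "real_cond_exp M ?FV ?b"
    let ?Eb = "real_cond_exp M ?FX ?b"
    let ?Et = "real_cond_exp M ?FX ?\<tau>"
    have bg: "AE \<omega> in M. \<bar>?g \<omega>\<bar> \<le> 1"
      by (rule ce_bound[OF P FV.sigma_finite_subalgebra_axioms]) (auto simp: indicator_def)
    have bEb: "AE \<omega> in M. \<bar>?Eb \<omega>\<bar> \<le> 1"
      by (rule ce_bound[OF P FX.sigma_finite_subalgebra_axioms]) (auto simp: indicator_def)
    have bEt: "AE \<omega> in M. \<bar>?Et \<omega>\<bar> \<le> 1"
      by (rule ce_bound[OF P FX.sigma_finite_subalgebra_axioms]) (auto simp: indicator_def)
    have EgEb: "AE \<omega> in M. real_cond_exp M ?FX ?g \<omega> = ?Eb \<omega>"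
    proof (rule FX.real_cond_exp_charact)
      show "integrable M ?g" by (rule bint[OF P]) (use bg in auto)
      show "integrable M ?Eb" by (rule bint[OF P]) (use bEb in auto)
      show "?Eb \<in> borel_measurable ?FX" by measurable
      fix G assume "G \<in> sets ?FX"
      then obtain A where A[measurable]: "A \<in> sets MX" and GA: "\<And>f::'a\<Rightarrow>real. (\<integral>x\<in>G. f x \<partial>M) = (\<integral>x. indicator A (X x) * f x \<partial>M)"
        using setint_va[OF \<open>X \<in> measurable M MX\<close>] by metis
      have "(\<integral>x\<in>G. ?Eb x \<partial>M) = (\<integral>x\<in>G. ?b x \<partial>M)"
        by (rule FX.real_cond_exp_intA[symmetric]) (auto intro!: bint[OF P] \<open>G \<in> sets ?FX\<close> simp: indicator_def)
      also have "\<dots> = (\<integral>x. indicator A (X x) * indicator UNIV (T x) * ?b x \<partial>M)" by (simp add: GA)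
      also have "\<dots> = (\<integral>x. indicator A (X x) * indicator UNIV (T x) * ?g x \<partial>M)"
        by (rule stepVT[OF P _ _ _ _ exch_v y_x_given_vt]) auto
      finally show "(\<integral>x\<in>G. ?g x \<partial>M) = (\<integral>x\<in>G. ?Eb x \<partial>M)" by (simp add: GA)
    qed
    show "AE \<omega> in M. real_cond_exp M ?FX (\<lambda>\<omega>. ?b \<omega> * ?\<tau> \<omega>) \<omega> = ?Eb \<omega> * ?Et \<omega>"
    proof (rule FX.real_cond_exp_charact)
      show "integrable M (\<lambda>\<omega>. ?b \<omega> * ?\<tau> \<omega>)" by (rule bint[OF P]) (auto simp: indicator_def)
      show "integrable M (\<lambda>\<omega>. ?Eb \<omega> * ?Et \<omega>)"
        by (rule bint[OF P]) (use AE_abs2[OF bEb bEt] in \<open>auto simp: abs_mult\<close>)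
      show "(\<lambda>\<omega>. ?Eb \<omega> * ?Et \<omega>) \<in> borel_measurable ?FX" by measurable
      fix G assume "G \<in> sets ?FX"
      then obtain A where A[measurable]: "A \<in> sets MX" and GA: "\<And>f::'a\<Rightarrow>real. (\<integral>x\<in>G. f x \<partial>M) = (\<integral>x. indicator A (X x) * f x \<partial>M)"
        using setint_va[OF \<open>X \<in> measurable M MX\<close>] by metis
      let ?a = "\<lambda>\<omega>. indicator A (X \<omega>) :: real"
      have step2: "(\<integral>x. ?a x * ?\<tau> x * ?g x \<partial>M) = (\<integral>x. ?a x * ?Et x * ?g x \<partial>M)"
      proof -
        have ae: "AE \<omega> in M. real_cond_exp M ?FV (\<lambda>\<omega>. ?a \<omega> * ?\<tau> \<omega>) \<omega> = real_cond_exp M ?FV (\<lambda>\<omega>. ?a \<omega> * ?Et \<omega>) \<omega>"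
        proof (rule FV.real_cond_exp_charact)
          show "integrable M (\<lambda>\<omega>. ?a \<omega> * ?\<tau> \<omega>)" by (rule bint[OF P]) (auto simp: indicator_def)
          have iaE: "integrable M (\<lambda>\<omega>. ?a \<omega> * ?Et \<omega>)" by (rule bint[OF P]) (use bEt in \<open>auto simp: indicator_def\<close>)
          then show "integrable M (real_cond_exp M ?FV (\<lambda>\<omega>. ?a \<omega> * ?Et \<omega>))" by (rule FV.real_cond_exp_int(1))
          show "real_cond_exp M ?FV (\<lambda>\<omega>. ?a \<omega> * ?Et \<omega>) \<in> borel_measurable ?FV" by measurable
          fix G' assume "G' \<in> sets ?FV"
          then obtain C where C[measurable]: "C \<in> sets MV" and GC: "\<And>f::'a\<Rightarrow>real. (\<integral>x\<in>G'. f x \<partial>M) = (\<integral>x. indicator C (V x) * f x \<partial>M)"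
            using setint_va[OF \<open>V \<in> measurable M MV\<close>] by metis
          let ?c = "\<lambda>\<omega>. indicator C (V \<omega>) :: real"
          have bEc: "AE \<omega> in M. \<bar>real_cond_exp M ?FX ?c \<omega>\<bar> \<le> 1"
            by (rule ce_bound[OF P FX.sigma_finite_subalgebra_axioms]) (auto simp: indicator_def)
          have h1: "AE \<omega> in M. real_cond_exp M ?FX (\<lambda>\<omega>. ?\<tau> \<omega> * ?c \<omega>) \<omega> = ?Et \<omega> * real_cond_exp M ?FX ?c \<omega>"
            using balancing C unfolding cond_indep_def by auto
          have "(\<integral>x\<in>G'. ?a x * ?\<tau> x \<partial>M) = (\<integral>x. ?a x * (?\<tau> x * ?c x) \<partial>M)"
            by (simp add: GC ac_simps)
          also have "\<dots> = (\<integral>x. ?a x * real_cond_exp M ?FX (\<lambda>\<omega>. ?\<tau> \<omega> * ?c \<omega>) x \<partial>M)"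
            by (rule FX.real_cond_exp_intg(2)[symmetric]) (auto intro!: bint[OF P] simp: indicator_def)
          also have "\<dots> = (\<integral>x. (?a x * ?Et x) * real_cond_exp M ?FX ?c x \<partial>M)"
            by (rule integral_cong_AE) (use h1 in auto)
          also have "\<dots> = (\<integral>x. (?a x * ?Et x) * ?c x \<partial>M)"
          proof (rule FX.real_cond_exp_intg(2))
            show "integrable M (\<lambda>x. ?a x * ?Et x * ?c x)"
              by (rule bint[OF P]) (use bEt in \<open>auto simp: indicator_def\<close>)
          qed auto
          also have "\<dots> = (\<integral>x\<in>G'. ?a x * ?Et x \<partial>M)"
            by (simp add: GC ac_simps)
          also have "\<dots> = (\<integral>x\<in>G'. real_cond_exp M ?FV (\<lambda>\<omega>. ?a \<omega> * ?Et \<omega>) x \<partial>M)"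
            by (rule FV.real_cond_exp_intA[OF iaE \<open>G' \<in> sets ?FV\<close>])
          finally show "(\<integral>x\<in>G'. ?a x * ?\<tau> x \<partial>M) = (\<integral>x\<in>G'. real_cond_exp M ?FV (\<lambda>\<omega>. ?a \<omega> * ?Et \<omega>) x \<partial>M)" .
        qed
        have "(\<integral>x. ?a x * ?\<tau> x * ?g x \<partial>M) = (\<integral>x. ?g x * (?a x * ?\<tau> x) \<partial>M)"
          by (simp add: ac_simps)
        also have "\<dots> = (\<integral>x. ?g x * real_cond_exp M ?FV (\<lambda>\<omega>. ?a \<omega> * ?\<tau> \<omega>) x \<partial>M)"
        proof (rule FV.real_cond_exp_intg(2)[symmetric])
          show "integrable M (\<lambda>x. ?g x * (?a x * ?\<tau> x))"
            by (rule bint[OF P]) (use bg in \<open>auto simp: indicator_def\<close>)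
        qed auto
        also have "\<dots> = (\<integral>x. ?g x * real_cond_exp M ?FV (\<lambda>\<omega>. ?a \<omega> * ?Et \<omega>) x \<partial>M)"
          by (rule integral_cong_AE) (use ae in auto)
        also have "\<dots> = (\<integral>x. ?g x * (?a x * ?Et x) \<partial>M)"
        proof (rule FV.real_cond_exp_intg(2))
          show "integrable M (\<lambda>x. ?g x * (?a x * ?Et x))"
            by (rule bint[OF P]) (use AE_abs2[OF bg bEt] in \<open>auto simp: indicator_def abs_mult\<close>)
        qed auto
        also have "\<dots> = (\<integral>x. ?a x * ?Et x * ?g x \<partial>M)"
          by (simp add: ac_simps)
        finally show ?thesis .
      qed
      have "(\<integral>x\<in>G. ?b x * ?\<tau> x \<partial>M) = (\<integral>x. ?a x * ?\<tau> x * ?b x \<partial>M)"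
        by (simp add: GA ac_simps)
      also have "\<dots> = (\<integral>x. ?a x * ?\<tau> x * ?g x \<partial>M)"
        by (rule stepVT[OF P _ _ _ _ exch_v y_x_given_vt]) auto
      also have "\<dots> = (\<integral>x. ?a x * ?Et x * ?g x \<partial>M)" by (rule step2)
      also have "\<dots> = (\<integral>x. ?a x * ?Et x * real_cond_exp M ?FX ?g x \<partial>M)"
      proof (rule FX.real_cond_exp_intg(2)[symmetric])
        show "integrable M (\<lambda>x. ?a x * ?Et x * ?g x)"
          by (rule bint[OF P]) (use AE_abs2[OF bEt bg] in \<open>auto simp: indicator_def abs_mult\<close>)
      qed auto
      also have "\<dots> = (\<integral>x. ?a x * ?Et x * ?Eb x \<partial>M)"
        by (rule integral_cong_AE) (use EgEb in auto)
      also have "\<dots> = (\<integral>x\<in>G. ?Eb x * ?Et x \<partial>M)"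
        by (simp add: GA ac_simps)
      finally show "(\<integral>x\<in>G. ?b x * ?\<tau> x \<partial>M) = (\<integral>x\<in>G. ?Eb x * ?Et x \<partial>M)" .
    qed
  qed
qed

end
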